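(* (Working in $\mathbf{ZF}$.) Suppose that $X$ is a weakly normal generalized topological space and that the Wallman space $\mathcal W(X,\mathrm{Cl}_X)$ is compact. Then, for $\mathcal C=\mathrm{Cl}_X$, the collection $\mathrm{Op}^w_{\mathcal W(X,\mathcal C)}$ is stable under finite unions and generates the topology of $\mathcal W(X,\mathcal C)$.
   Context: A generalized topological space (gts) $(X,\mathrm{Op}_X,\mathrm{Cov}_X)$ is in the sense of Delfs–Knebusch ($\mathrm{Op}_X\subseteq\mathcal P(X)$ contains $\emptyset,X$, is closed under finite unions and intersections, and $\mathrm{Cov}_X\subseteq\mathcal P(\mathrm{Op}_X)$ is a collection of admissible coverings satisfying the Delfs–Knebusch axioms). $\mathrm{Cl}_X=\{X\setminus U:U\in\mathrm{Op}_X\}$; $X_{top}$ is $X$ with the topology generated by $\mathrm{Op}_X$. $X$ is weakly normal if for all disjoint $A_1,A_2\subseteq X$, each a singleton or in $\mathrm{Cl}_X$, there are disjoint $W_1,W_2\in\mathrm{Op}_X$ with $A_i\subseteq W_i$. For the ring $\mathcal C=\mathrm{Cl}_X$, $\mathcal W(X,\mathcal C)$ is the set of ultrafilters (maximal filters) in $\mathcal C$ with the topology whose closed base is $\{[A]_{\mathcal C}:A\in\mathcal C\}$, $[A]_{\mathcal C}=\{p\in\mathcal W(X,\mathcal C):A\in p\}$. The map $w(x)=\{A\in\mathcal C:x\in A\}$ embeds $X_{top}$ homeomorphically onto a dense subset of $\mathcal W(X,\mathcal C)$, and we identify $X$ with $w(X)$, so $\mathcal W(X,\mathcal C)$ is a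 compactification of $X_{top}$. For $U\in\mathrm{Op}_X$, $\mathrm{Ex}_{\mathcal W(X,\mathcal C)}(U)=\mathcal W(X,\mathcal C)\setminus\mathrm{cl}_{\mathcal W(X,\mathcal C)}(X\setminus U)$, and $\mathrm{Op}^w_{\mathcal W(X,\mathcal C)}=\{\mathrm{Ex}_{\mathcal W(X,\mathcal C)}(U):U\in\mathrm{Op}_X\}$. *)

theory Defs
  imports "HOL-Analysis.Analysis"
begin

text \<open>A gts is a triple (X, Op, Cov); elements of Cov are admissible families,
  each being an admissible covering of its union.\<close>

definition gts :: "'a set \<Rightarrow> 'a set set \<Rightarrow> 'a set set set \<Rightarrow> bool" where
  "gts X Op Cov \<longleftrightarrow>
     Op \<subseteq> Pow X \<and> Cov \<subseteq> Pow Op \<and>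
     {} \<in> Op \<and> X \<in> Op \<and>
     (\<forall>U\<in>Op. \<forall>V\<in>Op. U \<union> V \<in> Op \<and> U \<inter> V \<in> Op) \<and>
     (\<forall>\<U>. \<U> \<subseteq> Op \<and> finite \<U> \<longrightarrow> \<U> \<in> Cov) \<and>
     (\<forall>\<U>\<in>Cov. \<Union>\<U> \<in> Op) \<and>
     (\<forall>\<U>\<in>Cov. \<forall>V\<in>Op. (\<lambda>U. U \<inter> V) ` \<U> \<in> Cov) \<and>
     (\<forall>\<U>\<in>Cov. \<forall>\<V>. (\<forall>U\<in>\<U>. \<V> U \<in> Cov \<and> \<Union>(\<V> U) = U) \<longrightarrow> (\<Union>U\<in>\<U>. \<V> U) \<in> Cov) \<and>
     (\<forall>\<U> \<V>. \<U> \<subseteq> Op \<and> \<V> \<in> Cov \<and> \<Union>\<V> = \<Union>\<U> \<and> (\<forall>V\<in>\<V>. \<exists>U\<in>\<U>. V \<subseteq> U)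
        \<longrightarrow> \<U> \<in> Cov) \<and>
     (\<forall>\<U> \<V>. \<U> \<subseteq> Op \<and> \<V> \<in> Cov \<and> \<Union>\<V> = \<Union>\<U> \<and> (\<forall>V\<in>\<V>. (\<lambda>U. U \<inter> V) ` \<U> \<in> Cov)
        \<longrightarrow> \<U> \<in> Cov)"

definition Cl :: "'a set \<Rightarrow> 'a set set \<Rightarrow> 'a set set" where
  "Cl X Op = {X - U | U. U \<in> Op}"

definition weakly_normal :: "'a set \<Rightarrow> 'a set set \<Rightarrow> bool" where
  "weakly_normal X Op \<longleftrightarrow>
     (\<forall>A1 A2. ((\<exists>x\<in>X. A1 = {x}) \<or> A1 \<in> Cl X Op) \<longrightarrow>
              ((\<exists>x\<in>X. A2 = {x}) \<or> A2 \<in> Cl X Op) \<longrightarrow> A1 \<inter> A2 = {} \<longrightarrow>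
              (\<exists>W1\<in>Op. \<exists>W2\<in>Op. W1 \<inter> W2 = {} \<and> A1 \<subseteq> W1 \<and> A2 \<subseteq> W2))"

definition set_filter :: "'a set set \<Rightarrow> 'a set set \<Rightarrow> bool" where
  "set_filter C F \<longleftrightarrow> F \<subseteq> C \<and> F \<noteq> {} \<and> {} \<notin> F \<and>
     (\<forall>A\<in>F. \<forall>B\<in>F. A \<inter> B \<in> F) \<and> (\<forall>A\<in>F. \<forall>B\<in>C. A \<subseteq> B \<longrightarrow> B \<in> F)"

definition set_ultrafilter :: "'a set set \<Rightarrow> 'a set set \<Rightarrow> bool" where
  "set_ultrafilter C F \<longleftrightarrow> set_filter C F \<and> (\<forall>G. set_filter C G \<and> F \<subseteq> G \<longrightarrow> G = F)"

definition Wallman :: "'a set set \<Rightarrow> 'a set set set" where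
  "Wallman C = {p. set_ultrafilter C p}"

definition wbase :: "'a set set \<Rightarrow> 'a set \<Rightarrow> 'a set set set" where
  "wbase C A = {p \<in> Wallman C. A \<in> p}"

definition Wallman_topology :: "'a set set \<Rightarrow> 'a set set topology" where
  "Wallman_topology C =
     subtopology (topology_generated_by {UNIV - wbase C A | A. A \<in> C}) (Wallman C)"

definition wmap :: "'a set set \<Rightarrow> 'a \<Rightarrow> 'a set set" where
  "wmap C x = {A \<in> C. x \<in> A}"

definition Ex_W :: "'a set \<Rightarrow> 'a set set \<Rightarrow> 'a set \<Rightarrow> 'a set set set" where
  "Ex_W X C U = Wallman C - (Wallman_topology C closure_of (wmap C ` (X - U)))"

definition OpW :: "'a set \<Rightarrow> 'a set set \<Rightarrow> 'a set set set set" where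
  "OpW X Op = {Ex_W X (Cl X Op) U | U. U \<in> Op}"

end

theory Submission
  imports Defs
begin
lemma gen1: "generate_topology_on S t \<Longrightarrow> generate_topology_on ((\<lambda>s. W \<inter> s) ` S) (W \<inter> t)"
proof (induction rule: generate_topology_on.induct)
  case Empty then show ?case by (simp add: generate_topology_on.Empty)
next
  case (Int a b)
  have "W \<inter> (a \<inter> b) = (W \<inter> a) \<inter> (W \<inter> b)" by blast
  then show ?case using Int.IH by (simp add: generate_topology_on.Int)
next
  case (UN K)
  have e: "W \<inter> \<Union>K = \<Union>((\<lambda>k. W \<inter> k) ` K)" by blast
  have "generate_topology_on ((\<lambda>s. W \<inter> s) ` S) (\<Union>((\<lambda>k. W \<inter> k) ` K))"
    by (rule generate_topology_on.UN) (use UN.IH in blast)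
  then show ?case by (simp only: e)
next
  case (Basis s) then show ?case by (intro generate_topology_on.Basis) simp
qed
lemma gen2: "generate_topology_on ((\<lambda>s. W \<inter> s) ` S) t \<Longrightarrow> \<exists>t'. generate_topology_on S t' \<and> W \<inter> t = W \<inter> t'"
proof (induction rule: generate_topology_on.induct)
  case Empty
  have "generate_topology_on S {}" by (rule generate_topology_on.Empty)
  then show ?case by blast
next
  case (Int a b)
  then obtain a' b' where "generate_topology_on S a'" "W \<inter> a = W \<inter> a'"
     "generate_topology_on S b'" "W \<inter> b = W \<inter> b'" by blast
  moreover have "W \<inter> (a \<inter> b) = W \<inter> (a' \<inter> b')" using calculation by blast
  moreover have "generate_topology_on S (a' \<inter> b')"
    using calculation by (intro generate_topology_on.Int)
  ultimately show ?case by blast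
next
  case (UN K)
  define f where "f k = (SOME t'. generate_topology_on S t' \<and> W \<inter> k = W \<inter> t')" for k
  have f: "generate_topology_on S (f k) \<and> W \<inter> k = W \<inter> f k" if "k \<in> K" for k
    unfolding f_def using someI_ex[OF UN.IH[OF that]] .
  have "W \<inter> \<Union>K = W \<inter> \<Union>(f ` K)"
  proof (rule set_eqI, rule iffI)
    fix x assume "x \<in> W \<inter> \<Union>K"
    then obtain k where "k \<in> K" "x \<in> W \<inter> k" by blast
    then show "x \<in> W \<inter> \<Union>(f ` K)" using f[of k] by blast
  next
    fix x assume "x \<in> W \<inter> \<Union>(f ` K)"
    then obtain k where "k \<in> K" "x \<in> W \<inter> f k" by blast
    then show "x \<in> W \<inter> \<Union>K" using f[of k] by blast
  qed
  moreover have "generate_topology_on S (\<Union>(f ` K))"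
    by (rule generate_topology_on.UN) (use f in blast)
  ultimately show ?case by blast
next
  case (Basis s)
  then obtain s0 where "s0 \<in> S" "s = W \<inter> s0" by blast
  moreover have "generate_topology_on S s0" using \<open>s0 \<in> S\<close> by (rule generate_topology_on.Basis)
  ultimately show ?case by blast
qed

lemma gen_sub_eq:
  "subtopology (topology_generated_by S) W = subtopology (topology_generated_by ((\<lambda>s. W \<inter> s) ` S)) W"
  unfolding topology_eq
proof (intro allI iffI)
  fix u assume "openin (subtopology (topology_generated_by S) W) u"
  then obtain t where t: "generate_topology_on S t" "u = t \<inter> W"
    unfolding openin_subtopology openin_topology_generated_by_iff by blast
  have "u = (W \<inter> t) \<inter> W" using t(2) by blast
  then show "openin (subtopology (topology_generated_by ((\<lambda>s. W \<inter> s) ` S)) W) u"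
    unfolding openin_subtopology openin_topology_generated_by_iff using gen1[OF t(1)] by (intro exI[of _ "W \<inter> t"]) simp
next
  fix u assume "openin (subtopology (topology_generated_by ((\<lambda>s. W \<inter> s) ` S)) W) u"
  then obtain t where t: "generate_topology_on ((\<lambda>s. W \<inter> s) ` S) t" "u = t \<inter> W"
    unfolding openin_subtopology openin_topology_generated_by_iff by blast
  from gen2[OF t(1)] obtain t' where t': "generate_topology_on S t'" "W \<inter> t = W \<inter> t'" by blast
  have "u = t' \<inter> W" using t(2) t'(2) by blast
  then show "openin (subtopology (topology_generated_by S) W) u"
    unfolding openin_subtopology openin_topology_generated_by_iff using t'(1) by (intro exI[of _ t']) simp
qed
lemma ultra_avoid:
  assumes U: "set_ultrafilter C p" and B: "B \<in> C" "B \<notin> p"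
    and Cint: "\<And>A B. A \<in> C \<Longrightarrow> B \<in> C \<Longrightarrow> A \<inter> B \<in> C"
  shows "\<exists>D\<in>p. D \<inter> B = {}"
proof (rule ccontr)
  assume nd: "\<not> (\<exists>D\<in>p. D \<inter> B = {})"
  define G where "G = {E \<in> C. \<exists>D\<in>p. D \<inter> B \<subseteq> E}"
  have F: "set_filter C p" using U by (simp add: set_ultrafilter_def)
  hence pC: "p \<subseteq> C" and pne: "p \<noteq> {}" and pint: "\<forall>A\<in>p. \<forall>B\<in>p. A \<inter> B \<in> p"
    by (auto simp: set_filter_def)
  have "set_filter C G"
    unfolding set_filter_def G_def
  proof (intro conjI ballI impI)
    show "{E \<in> C. \<exists>D\<in>p. D \<inter> B \<subseteq> E} \<subseteq> C" by auto
    from pne obtain D where "D \<in> p" by auto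
    thus "{E \<in> C. \<exists>D\<in>p. D \<inter> B \<subseteq> E} \<noteq> {}" using B by auto
    show "{} \<notin> {E \<in> C. \<exists>D\<in>p. D \<inter> B \<subseteq> E}" using nd by auto
  next
    fix A1 A2 assume a1: "A1 \<in> {E \<in> C. \<exists>D\<in>p. D \<inter> B \<subseteq> E}" and a2: "A2 \<in> {E \<in> C. \<exists>D\<in>p. D \<inter> B \<subseteq> E}"
    then obtain D1 D2 where "D1 \<in> p" "D2 \<in> p" "D1 \<inter> B \<subseteq> A1" "D2 \<inter> B \<subseteq> A2" by auto
    moreover have "D1 \<inter> D2 \<in> p" using pint \<open>D1 \<in> p\<close> \<open>D2 \<in> p\<close> by auto
    ultimately show "A1 \<inter> A2 \<in> {E \<in> C. \<exists>D\<in>p. D \<inter> B \<subseteq> E}" using a1 a2 Cint by blast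
  next
    fix A1 A2 assume "A1 \<in> {E \<in> C. \<exists>D\<in>p. D \<inter> B \<subseteq> E}" "A2 \<in> C" "A1 \<subseteq> A2"
    thus "A2 \<in> {E \<in> C. \<exists>D\<in>p. D \<inter> B \<subseteq> E}" by blast
  qed
  moreover have "p \<subseteq> G" unfolding G_def using pC by blast
  ultimately have "G = p" using U by (simp add: set_ultrafilter_def)
  moreover have "B \<in> G" unfolding G_def using B pne by blast
  ultimately show False using B by simp
qed

lemma Cl_facts:
  assumes g: "gts X Op Cov"
  shows "X \<in> Cl X Op" "{} \<in> Cl X Op" "\<And>A B. A \<in> Cl X Op \<Longrightarrow> B \<in> Cl X Op \<Longrightarrow> A \<inter> B \<in> Cl X Op"
    "\<And>A. A \<in> Cl X Op \<Longrightarrow> A \<subseteq> X"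
    "\<And>U. U \<in> Op \<Longrightarrow> X - U \<in> Cl X Op"
proof -
  have op: "{} \<in> Op" "X \<in> Op" "\<And>U V. U \<in> Op \<Longrightarrow> V \<in> Op \<Longrightarrow> U \<union> V \<in> Op"
    using g unfolding gts_def by auto
  show "X \<in> Cl X Op" unfolding Cl_def using op(1) by (intro CollectI exI[of _ "{}"]) simp
  show "{} \<in> Cl X Op" unfolding Cl_def using op(2) by (intro CollectI exI[of _ X]) simp
  show "\<And>U. U \<in> Op \<Longrightarrow> X - U \<in> Cl X Op" unfolding Cl_def by blast
  show "\<And>A. A \<in> Cl X Op \<Longrightarrow> A \<subseteq> X" unfolding Cl_def by blast
  fix A B assume "A \<in> Cl X Op" "B \<in> Cl X Op"
  then obtain U V where "U \<in> Op" "V \<in> Op" "A = X - U" "B = X - V" unfolding Cl_def by blast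
  moreover have "(X - U) \<inter> (X - V) = X - (U \<union> V)" by blast
  ultimately show "A \<inter> B \<in> Cl X Op" unfolding Cl_def using op(3) by blast
qed

lemma wmap_W:
  assumes g: "gts X Op Cov" and wn: "weakly_normal X Op" and x: "x \<in> X"
  shows "wmap (Cl X Op) x \<in> Wallman (Cl X Op)"
proof -
  note cf = Cl_facts[OF g]
  let ?C = "Cl X Op"
  have F: "set_filter ?C (wmap ?C x)"
    unfolding set_filter_def
  proof (intro conjI ballI impI)
    show "wmap ?C x \<subseteq> ?C" unfolding wmap_def by blast
    show "wmap ?C x \<noteq> {}" unfolding wmap_def using cf(1) x by blast
    show "{} \<notin> wmap ?C x" unfolding wmap_def by blast
    show "A \<inter> B \<in> wmap ?C x" if "A \<in> wmap ?C x" "B \<in> wmap ?C x" for A B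
      using that cf(3) unfolding wmap_def by blast
    show "B \<in> wmap ?C x" if "A \<in> wmap ?C x" "B \<in> ?C" "A \<subseteq> B" for A B
      using that unfolding wmap_def by blast
  qed
  have "G = wmap ?C x" if G: "set_filter ?C G" "wmap ?C x \<subseteq> G" for G
  proof
    show "wmap ?C x \<subseteq> G" by fact
    show "G \<subseteq> wmap ?C x"
    proof
      fix B assume BG: "B \<in> G"
      have "G \<subseteq> ?C" using G(1) unfolding set_filter_def by (elim conjE)
      hence BC: "B \<in> ?C" using BG by (rule subsetD)
      show "B \<in> wmap ?C x"
      proof (rule ccontr)
        assume "B \<notin> wmap ?C x"
        hence "x \<notin> B" using BC unfolding wmap_def by blast
        hence "{x} \<inter> B = {}" by blast
        then obtain W1 W2 where W: "W1 \<in> Op" "W2 \<in> Op" "W1 \<inter> W2 = {}" "{x} \<subseteq> W1" "B \<subseteq> W2"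
        proof -
          have h1: "(\<exists>y\<in>X. {x} = {y}) \<or> {x} \<in> ?C" using x by blast
          have h2: "(\<exists>y\<in>X. B = {y}) \<or> B \<in> ?C" using BC by blast
          have "\<exists>W1\<in>Op. \<exists>W2\<in>Op. W1 \<inter> W2 = {} \<and> {x} \<subseteq> W1 \<and> B \<subseteq> W2"
            using wn[unfolded weakly_normal_def, rule_format, OF h1 h2 \<open>{x} \<inter> B = {}\<close>] .
          then show ?thesis using that by blast
        qed
        have "X - W2 \<in> wmap ?C x" unfolding wmap_def using cf(5)[OF W(2)] W x by blast
        hence "X - W2 \<in> G" using G(2) by blast
        hence "(X - W2) \<inter> B \<in> G" using BG G(1) unfolding set_filter_def by blast
        moreover have "(X - W2) \<inter> B = {}" using W by blast
        ultimately show False using G(1) unfolding set_filter_def by simp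
      qed
    qed
  qed
  then show ?thesis unfolding Wallman_def set_ultrafilter_def using F by blast
qed

lemma key_ind:
  assumes g: "gts X Op Cov"
    and t: "generate_topology_on {UNIV - wbase (Cl X Op) A | A. A \<in> Cl X Op} t"
  shows "\<forall>p\<in>t \<inter> Wallman (Cl X Op). \<exists>D\<in>p. \<forall>x\<in>D. wmap (Cl X Op) x \<in> t"
  using t
proof (induction rule: generate_topology_on.induct)
  case Empty then show ?case by blast
next
  case (Int a b)
  show ?case
  proof
    fix p assume p: "p \<in> a \<inter> b \<inter> Wallman (Cl X Op)"
    then obtain D1 D2 where "D1 \<in> p" "D2 \<in> p" "\<forall>x\<in>D1. wmap (Cl X Op) x \<in> a" "\<forall>x\<in>D2. wmap (Cl X Op) x \<in> b"
      using Int.IH by blast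
    moreover have "D1 \<inter> D2 \<in> p" using p calculation
      unfolding Wallman_def set_ultrafilter_def set_filter_def by blast
    ultimately show "\<exists>D\<in>p. \<forall>x\<in>D. wmap (Cl X Op) x \<in> a \<inter> b" by blast
  qed
next
  case (UN K)
  show ?case
  proof
    fix p assume "p \<in> \<Union>K \<inter> Wallman (Cl X Op)"
    then obtain k where "k \<in> K" "p \<in> k \<inter> Wallman (Cl X Op)" by blast
    then obtain D where "D \<in> p" "\<forall>x\<in>D. wmap (Cl X Op) x \<in> k" using UN.IH by blast
    then show "\<exists>D\<in>p. \<forall>x\<in>D. wmap (Cl X Op) x \<in> \<Union>K" using \<open>k \<in> K\<close> by blast
  qed
next
  case (Basis s)
  then obtain B where B: "B \<in> Cl X Op" "s = UNIV - wbase (Cl X Op) B" by blast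
  show ?case
  proof
    fix p assume p: "p \<in> s \<inter> Wallman (Cl X Op)"
    hence U: "set_ultrafilter (Cl X Op) p" and "B \<notin> p"
      using B unfolding Wallman_def wbase_def by auto
    then obtain D where "D \<in> p" "D \<inter> B = {}"
      using ultra_avoid[OF U B(1)] Cl_facts(3)[OF g] by blast
    moreover have "wmap (Cl X Op) x \<in> s" if "x \<in> D" for x
      using that calculation B unfolding wmap_def wbase_def by blast
    ultimately show "\<exists>D\<in>p. \<forall>x\<in>D. wmap (Cl X Op) x \<in> s" by blast
  qed
qed

lemma topspace_WT:
  assumes g: "gts X Op Cov"
  shows "topspace (Wallman_topology (Cl X Op)) = Wallman (Cl X Op)"
proof -
  have "wbase (Cl X Op) {} = {}"
    unfolding wbase_def Wallman_def set_ultrafilter_def set_filter_def by blast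
  hence "UNIV \<in> {UNIV - wbase (Cl X Op) A | A. A \<in> Cl X Op}"
    using Cl_facts(2)[OF g] by (intro CollectI exI[of _ "{}"]) simp
  hence "\<Union>{UNIV - wbase (Cl X Op) A | A. A \<in> Cl X Op} = UNIV" by blast
  then show ?thesis unfolding Wallman_topology_def by (simp add: topspace_subtopology)
qed

lemma closure_wmap:
  assumes g: "gts X Op Cov" and wn: "weakly_normal X Op" and A: "A \<in> Cl X Op"
  shows "Wallman_topology (Cl X Op) closure_of (wmap (Cl X Op) ` A) = wbase (Cl X Op) A"
proof
  let ?C = "Cl X Op" and ?S = "{UNIV - wbase (Cl X Op) A | A. A \<in> Cl X Op}"
  have AX: "A \<subseteq> X" using Cl_facts(4)[OF g A] .
  have "closedin (topology_generated_by ?S) (wbase ?C A)"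
  proof -
    have "wbase (Cl X Op) {} = {}"
      unfolding wbase_def Wallman_def set_ultrafilter_def set_filter_def by blast
    hence "UNIV \<in> ?S"
      using Cl_facts(2)[OF g] by (intro CollectI exI[of _ "{}"]) simp
    hence ts: "topspace (topology_generated_by ?S) = UNIV" by auto
    have "openin (topology_generated_by ?S) (UNIV - wbase ?C A)"
      by (rule topology_generated_by_Basis) (use A in blast)
    then show ?thesis unfolding closedin_def ts by simp
  qed
  moreover have "wbase ?C A = wbase ?C A \<inter> Wallman ?C" unfolding wbase_def by blast
  ultimately have cl: "closedin (Wallman_topology ?C) (wbase ?C A)"
    unfolding Wallman_topology_def closedin_subtopology by blast
  have "wmap ?C ` A \<subseteq> wbase ?C A"
  proof
    fix q assume "q \<in> wmap ?C ` A"
    then obtain x where x: "x \<in> A" "q = wmap ?C x" by blast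
    have "q \<in> Wallman ?C" using wmap_W[OF g wn] x AX by blast
    moreover have "A \<in> q" using x A unfolding wmap_def by blast
    ultimately show "q \<in> wbase ?C A" unfolding wbase_def by blast
  qed
  then show "Wallman_topology ?C closure_of (wmap ?C ` A) \<subseteq> wbase ?C A"
    using cl by (rule closure_of_minimal)
  show "wbase ?C A \<subseteq> Wallman_topology ?C closure_of (wmap ?C ` A)"
  proof
    fix p assume p: "p \<in> wbase ?C A"
    hence pW: "p \<in> Wallman ?C" and Ap: "A \<in> p" unfolding wbase_def by auto
    have pf: "set_filter ?C p" using pW unfolding Wallman_def set_ultrafilter_def by blast
    show "p \<in> Wallman_topology ?C closure_of (wmap ?C ` A)"
      unfolding in_closure_of
    proof (intro conjI allI impI)
      show "p \<in> topspace (Wallman_topology ?C)" using topspace_WT[OF g] pW by simp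
      fix T assume T: "p \<in> T \<and> openin (Wallman_topology ?C) T"
      then obtain t where t: "generate_topology_on ?S t" "T = t \<inter> Wallman ?C"
        unfolding Wallman_topology_def openin_subtopology openin_topology_generated_by_iff by blast
      have "p \<in> t \<inter> Wallman ?C" using T t by blast
      then obtain D where D: "D \<in> p" "\<forall>x\<in>D. wmap ?C x \<in> t"
        using key_ind[OF g t(1)] by blast
      have "A \<inter> D \<in> p" using pf Ap D(1) unfolding set_filter_def by blast
      hence "A \<inter> D \<noteq> {}" using pf unfolding set_filter_def by metis
      then obtain x where x: "x \<in> A" "x \<in> D" by blast
      have "wmap ?C x \<in> Wallman ?C" using wmap_W[OF g wn] x AX by blast
      hence "wmap ?C x \<in> T" using t(2) D(2) x by blast
      then show "\<exists>y. y \<in> wmap ?C ` A \<and> y \<in> T" using x by blast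
    qed
  qed
qed

lemma ExW_eq:
  assumes g: "gts X Op Cov" and wn: "weakly_normal X Op" and U: "U \<in> Op"
  shows "Ex_W X (Cl X Op) U = Wallman (Cl X Op) - wbase (Cl X Op) (X - U)"
  unfolding Ex_W_def using closure_wmap[OF g wn Cl_facts(5)[OF g U]] by simp

lemma W_filter: "p \<in> Wallman C \<Longrightarrow> set_filter C p"
  unfolding Wallman_def set_ultrafilter_def by simp

lemma wbase_Int:
  assumes "A \<in> C" "B \<in> C"
  shows "wbase C (A \<inter> B) = wbase C A \<inter> wbase C B"
proof (rule set_eqI, rule iffI)
  fix p assume p: "p \<in> wbase C (A \<inter> B)"
  hence pW: "p \<in> Wallman C" and AB: "A \<inter> B \<in> p" unfolding wbase_def by simp_all
  have up: "\<forall>A\<in>p. \<forall>B\<in>C. A \<subseteq> B \<longrightarrow> B \<in> p"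
    using W_filter[OF pW] unfolding set_filter_def by (elim conjE)
  have "A \<in> p" using up AB assms(1) by (meson Int_lower1)
  moreover have "B \<in> p" using up AB assms(2) by (meson Int_lower2)
  ultimately show "p \<in> wbase C A \<inter> wbase C B" using pW unfolding wbase_def by simp
next
  fix p assume p: "p \<in> wbase C A \<inter> wbase C B"
  hence pW: "p \<in> Wallman C" and "A \<in> p" "B \<in> p" unfolding wbase_def by simp_all
  have "\<forall>A\<in>p. \<forall>B\<in>p. A \<inter> B \<in> p"
    using W_filter[OF pW] unfolding set_filter_def by (elim conjE)
  hence "A \<inter> B \<in> p" using \<open>A \<in> p\<close> \<open>B \<in> p\<close> by blast
  then show "p \<in> wbase C (A \<inter> B)" using pW unfolding wbase_def by simp
qed
theorem proposition5p14:
  fixes X :: "'a set" and Op :: "'a set set" and Cov :: "'a set set set"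
  assumes "gts X Op Cov"
    and "weakly_normal X Op"
    and "compact_space (Wallman_topology (Cl X Op))"
  shows "(\<forall>\<F>. finite \<F> \<and> \<F> \<subseteq> OpW X Op \<longrightarrow> \<Union>\<F> \<in> OpW X Op)
    \<and> subtopology (topology_generated_by (OpW X Op)) (Wallman (Cl X Op))
        = Wallman_topology (Cl X Op)"
proof
  note g = assms(1) and wn = assms(2)
  let ?C = "Cl X Op" and ?W = "Wallman (Cl X Op)"
  have op: "{} \<in> Op" "\<And>U V. U \<in> Op \<Longrightarrow> V \<in> Op \<Longrightarrow> U \<union> V \<in> Op"
  proof -
    have "{} \<in> Op \<and> (\<forall>U\<in>Op. \<forall>V\<in>Op. U \<union> V \<in> Op \<and> U \<inter> V \<in> Op)"
      using g unfolding gts_def by (elim conjE) (intro conjI)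
    then show "{} \<in> Op" "\<And>U V. U \<in> Op \<Longrightarrow> V \<in> Op \<Longrightarrow> U \<union> V \<in> Op" by simp_all
  qed
  note cf = Cl_facts[OF g]
  have emp: "{} \<in> OpW X Op"
  proof -
    have "wbase ?C X = ?W"
    proof (rule set_eqI, rule iffI)
      fix p assume "p \<in> wbase ?C X" then show "p \<in> ?W" unfolding wbase_def by simp
    next
      fix p assume pW: "p \<in> ?W"
      have F: "p \<subseteq> ?C" "p \<noteq> {}" "\<forall>A\<in>p. \<forall>B\<in>?C. A \<subseteq> B \<longrightarrow> B \<in> p"
        using W_filter[OF pW] unfolding set_filter_def by simp_all
      then obtain D where D: "D \<in> p" by blast
      hence "D \<subseteq> X" using F(1) cf(4) by blast
      hence "X \<in> p" using F(3) D cf(1) by blast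
      then show "p \<in> wbase ?C X" using pW unfolding wbase_def by simp
    qed
    hence "Ex_W X ?C {} = {}" using ExW_eq[OF g wn op(1)] by simp
    then show ?thesis unfolding OpW_def using op(1) by blast
  qed
  have un: "a \<union> b \<in> OpW X Op" if ab: "a \<in> OpW X Op" "b \<in> OpW X Op" for a b
  proof -
    obtain U V where UV: "U \<in> Op" "V \<in> Op" "a = Ex_W X ?C U" "b = Ex_W X ?C V"
      using ab unfolding OpW_def by blast
    have e: "X - (U \<union> V) = (X - U) \<inter> (X - V)" by blast
    have "wbase ?C (X - (U \<union> V)) = wbase ?C (X - U) \<inter> wbase ?C (X - V)"
      unfolding e using cf(5)[OF UV(1)] cf(5)[OF UV(2)] by (rule wbase_Int)
    hence "a \<union> b = Ex_W X ?C (U \<union> V)"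
      using ExW_eq[OF g wn] UV op(2)[OF UV(1,2)] by auto
    then show ?thesis unfolding OpW_def using op(2)[OF UV(1,2)] by blast
  qed
  show "\<forall>\<F>. finite \<F> \<and> \<F> \<subseteq> OpW X Op \<longrightarrow> \<Union>\<F> \<in> OpW X Op"
  proof (intro allI impI, elim conjE)
    fix F :: "'a set set set set" assume "finite F" "F \<subseteq> OpW X Op"
    then show "\<Union>F \<in> OpW X Op"
    proof (induction F rule: finite_induct)
      case empty then show ?case using emp by simp
    next
      case (insert a F)
      then show ?case using un by simp
    qed
  qed
  let ?S = "{UNIV - wbase ?C A | A. A \<in> ?C}"
  have "OpW X Op = (\<lambda>s. ?W \<inter> s) ` ?S"
  proof (rule set_eqI, rule iffI)
    fix a assume "a \<in> OpW X Op"
    then obtain U where U: "U \<in> Op" "a = Ex_W X ?C U" unfolding OpW_def by blast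
    hence "a = ?W \<inter> (UNIV - wbase ?C (X - U))" using ExW_eq[OF g wn U(1)] by blast
    then show "a \<in> (\<lambda>s. ?W \<inter> s) ` ?S" using cf(5)[OF U(1)] by blast
  next
    fix a assume "a \<in> (\<lambda>s. ?W \<inter> s) ` ?S"
    then obtain A where A: "A \<in> ?C" "a = ?W \<inter> (UNIV - wbase ?C A)" by blast
    then obtain U where U: "U \<in> Op" "A = X - U" unfolding Cl_def by blast
    have "a = Ex_W X ?C U" using ExW_eq[OF g wn U(1)] A(2) U(2) by blast
    then show "a \<in> OpW X Op" unfolding OpW_def using U(1) by blast
  qed
  then show "subtopology (topology_generated_by (OpW X Op)) ?W = Wallman_topology ?C"
    unfolding Wallman_topology_def using gen_sub_eq[of ?S ?W] by simp
qed
end
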